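(* For each of the following tableaux $D$ (listed by rows) and vector spaces $W$, the map $\rho(D)$ defined below is nonzero: $D_1$ with rows $(1,1,1,2,2,3,3)$, $(2)$, $(3)$ and $\dim W=7$; $D_2$ with rows $(1,1,1,2,2,3,3,4)$, $(2,4,4)$, $(3)$ and $\dim W=8$; $D_3$ with rows $(1,1,1,2,2,3,3,4,4)$, $(2)$, $(3)$, $(4)$ and $\dim W=9$; $D_4$ with rows $(1,1,1,2,2,3,3,4,5)$, $(2,4,4,5)$, $(3,5)$ and $\dim W=9$.
   Context: $K$ is an algebraically closed field of characteristic zero. A numbering scheme $D$ is a Young tableau with $3d$ boxes filled with $1,\dots,d$, each number occurring exactly three times, weakly increasing along rows and strictly increasing down columns. Let its rows have lengths $\ell_1,\dots,\ell_r$ and let $e_{i,s}$ be the number of entries equal to $s$ in row $i$ (so $\sum_i e_{i,s}=3$). The map $\rho(D):\Lambda^{\ell_1}W\otimes\cdots\otimes\Lambda^{\ell_r}W\to S^d(\Lambda^3W)$ is the composition of: (a) for each $i$, the comultiplication $\Lambda^{\ell_i}W\to\Lambda^{e_{i,1}}W\otimes\cdots\otimes\Lambda^{e_{i,d}}W$; (b) after rearranging factors, for each $s$ the multiplication $\Lambda^{e_{1,s}}W\otimes\cdots\otimes\Lambda^{e_{r,s}}W\to\Lambda^3W$, tensored over $s=1,\dots,d$ to land in $(\Lambda^3W)^{\otimes d}$; (c) the symmetrization $(\Lambda^3W)^{\otimes d}\to S^d(\Lambda^3W)$. *)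

theory Defs
  imports "HOL-Computational_Algebra.Polynomial" "HOL-Library.Multiset"
begin

text \<open>Coordinates: W = K^n with basis e_0,...,e_(n-1). The exterior power
Lambda^l W has basis e_S for l-subsets S of {0..<n}; e_S is the wedge of the e_j, j in S,
in increasing order. S^d(Lambda^3 W) has basis the monomials, i.e. multisets of
d basis vectors e_B (B a 3-subset); an element is its coefficient function
on multisets. A numbering scheme is a list of rows, each row a list of entries in 1..d.\<close>

definition inv_count :: "nat set list \<Rightarrow> nat" where
  "inv_count As = card {(p,q,x,y). p < q \<and> q < length As \<and> x \<in> As!p \<and> y \<in> As!q \<and> y < x}"

text \<open>e_(A_1) wedge ... wedge e_(A_k) = wedge_sign [A_1..A_k] * e_(A_1 \<union> ... \<union> A_k)
  for pairwise disjoint A_i; the same sign is the coefficient of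
  e_(A_1) \<otimes> ... \<otimes> e_(A_k) in the comultiplication of e_(A_1 \<union> ... \<union> A_k).\<close>
definition wedge_sign :: "nat set list \<Rightarrow> 'a::comm_ring_1" where
  "wedge_sign As = (-1) ^ inv_count As"

definition pairwise_disj :: "nat set list \<Rightarrow> bool" where
  "pairwise_disj As \<longleftrightarrow> (\<forall>p<length As. \<forall>q<length As. p \<noteq> q \<longrightarrow> As!p \<inter> As!q = {})"

text \<open>Coefficient of the multiplication Lambda^(a_1) W \<otimes> ... \<otimes> Lambda^(a_k) W \<rightarrow> Lambda W on basis vectors.\<close>
definition wedge_coeff :: "nat set list \<Rightarrow> 'a::comm_ring_1" where
  "wedge_coeff As = (if pairwise_disj As then wedge_sign As else 0)"

text \<open>d = number of distinct entries (largest entry); e D i s = number of entries s in row i.\<close>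
definition ns_d :: "nat list list \<Rightarrow> nat" where
  "ns_d D = Max (set (concat D))"

definition ns_e :: "nat list list \<Rightarrow> nat \<Rightarrow> nat \<Rightarrow> nat" where
  "ns_e D i s = count_list (D!i) s"

text \<open>Terms of the comultiplications (step (a)): for each row i a decomposition of S_i into
  the ordered list of blocks As!i!s (s < d, block s corresponding to entry s+1) of sizes e_(i,s+1).\<close>
definition row_splits :: "nat list list \<Rightarrow> nat set list \<Rightarrow> nat set list list set" where
  "row_splits D Ss = {As. length As = length D \<and>
     (\<forall>i<length D. length (As!i) = ns_d D \<and>
        (\<forall>s<ns_d D. card (As!i!s) = ns_e D i (s+1)) \<and>
        pairwise_disj (As!i) \<and> \<Union> (set (As!i)) = Ss!i)}"

definition col :: "nat set list list \<Rightarrow> nat \<Rightarrow> nat set list" where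
  "col As s = map (\<lambda>i. As!i!s) [0..<length As]"

text \<open>rho(D) applied to the basis tensor e_(S_1) \<otimes> ... \<otimes> e_(S_r), as coefficient function on monomials.\<close>
definition rho_basis :: "nat list list \<Rightarrow> nat set list \<Rightarrow> nat set multiset \<Rightarrow> 'a::comm_ring_1" where
  "rho_basis D Ss M = (\<Sum>As\<in>row_splits D Ss.
      (\<Prod>i<length D. wedge_sign (As!i)) *
      (\<Prod>s<ns_d D. wedge_coeff (col As s)) *
      (if mset (map (\<lambda>s. \<Union> (set (col As s))) [0..<ns_d D]) = M then 1 else 0))"

text \<open>Basis of Lambda^(l_1) W \<otimes> ... \<otimes> Lambda^(l_r) W, W = K^n.\<close>
definition basis_tuples :: "nat list list \<Rightarrow> nat \<Rightarrow> nat set list set" where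
  "basis_tuples D n = {Ss. length Ss = length D \<and>
     (\<forall>i<length D. Ss!i \<subseteq> {0..<n} \<and> card (Ss!i) = length (D!i))}"

text \<open>rho(D) on an arbitrary element of the domain given by its coordinates c.\<close>
definition rho :: "nat list list \<Rightarrow> nat \<Rightarrow> (nat set list \<Rightarrow> 'a::comm_ring_1) \<Rightarrow> nat set multiset \<Rightarrow> 'a" where
  "rho D n c = (\<lambda>M. \<Sum>Ss\<in>basis_tuples D n. c Ss * rho_basis D Ss M)"

end

theory Submission
  imports Defs
begin


definition blocks :: "nat set \<Rightarrow> nat \<Rightarrow> nat set list" where
  "blocks A e = filter (\<lambda>B. card B = e) (map set (subseqs (sorted_list_of_set A)))"

lemma set_blocks: "finite A \<Longrightarrow> B \<in> set (blocks A e) \<longleftrightarrow> B \<subseteq> A \<and> card B = e"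
proof -
  assume f: "finite A"
  have "set (map set (subseqs (sorted_list_of_set A))) = Pow A"
    using subseqs_powset[of "sorted_list_of_set A"] f by simp
  then show ?thesis unfolding blocks_def by auto
qed

definition tailc :: "nat list list \<Rightarrow> nat set list \<Rightarrow> nat set list \<Rightarrow> nat set list list list" where
  "tailc D Ss Cs = product_lists (map (\<lambda>i. product_lists (map (\<lambda>s. blocks (Ss!i \<inter> Cs!s) (ns_e D i (s+1))) [0..<ns_d D])) [1..<length D])"

definition mkhd :: "nat \<Rightarrow> nat set list \<Rightarrow> nat set list list \<Rightarrow> nat set list" where
  "mkhd d Cs T = map (\<lambda>s. Cs!s - \<Union> (set (map (\<lambda>R. R!s) T))) [0..<d]"

definition cands :: "nat list list \<Rightarrow> nat set list \<Rightarrow> nat set multiset \<Rightarrow> nat set list \<Rightarrow> nat set list list list" where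
  "cands D Ss M Ml = concat (map (\<lambda>Cs. map (\<lambda>T. mkhd (ns_d D) Cs T # T) (tailc D Ss Cs)) (filter (\<lambda>Cs. mset Cs = M) (List.n_lists (ns_d D) Ml)))"

lemma cover:
  assumes rs: "As \<in> row_splits D Ss" and ne: "D \<noteq> []" and fin: "\<forall>i<length D. finite (Ss!i)"
    and disj: "\<forall>s<ns_d D. pairwise_disj (col As s)"
    and Ml: "set_mset M \<subseteq> set Ml"
    and mM: "mset (map (\<lambda>s. \<Union> (set (col As s))) [0..<ns_d D]) = M"
  shows "As \<in> set (cands D Ss M Ml)"
proof -
  define d where "d = ns_d D"
  have lenAs: "length As = length D" using rs unfolding row_splits_def by simp
  have rows: "\<And>i. i < length D \<Longrightarrow> length (As!i) = d \<and>
        (\<forall>s<d. card (As!i!s) = ns_e D i (s+1)) \<and> pairwise_disj (As!i) \<and> \<Union> (set (As!i)) = Ss!i"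
    using rs unfolding row_splits_def d_def by auto
  define Cs where "Cs = map (\<lambda>s. \<Union> (set (col As s))) [0..<d]"
  have Cs_M: "mset Cs = M" using mM unfolding Cs_def d_def by simp
  have Cs_in: "Cs \<in> set (List.n_lists d Ml)"
  proof -
    have "set Cs = set_mset M" using mM unfolding Cs_def d_def by (metis set_mset_mset)
    then show ?thesis unfolding set_n_lists Cs_def using Ml by auto
  qed
  define T where "T = tl As"
  have Asne: "As \<noteq> []" using lenAs ne by auto
  have AsT: "As = As!0 # T" unfolding T_def using Asne by (cases As) auto
  have lenT: "length T = length D - 1" unfolding T_def using lenAs by simp
  have Tnth: "\<And>i. T!i = As!(Suc i)" unfolding T_def using Asne by (cases As) auto
  have colnth: "\<And>s i. i < length As \<Longrightarrow> As!i!s \<in> set (col As s)"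
    unfolding col_def by auto
  have sub: "\<And>i s. i < length D \<Longrightarrow> s < d \<Longrightarrow> As!i!s \<subseteq> Ss!i \<inter> Cs!s"
  proof -
    fix i s assume i: "i < length D" and s: "s < d"
    have "As!i!s \<in> set (As!i)" using rows[OF i] s by auto
    then have "As!i!s \<subseteq> Ss!i" using rows[OF i] by auto
    moreover have "As!i!s \<subseteq> Cs!s" unfolding Cs_def using s colnth[of i s] i lenAs by auto
    ultimately show "As!i!s \<subseteq> Ss!i \<inter> Cs!s" by auto
  qed
  have T_in: "T \<in> set (tailc D Ss Cs)"
    unfolding tailc_def product_lists_set
    apply (simp add: list_all2_conv_all_nth lenT product_lists_set Tnth)
  proof (intro allI impI conjI)
    fix i assume "i < length D - Suc 0"
    then have i: "Suc i < length D" by simp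
    show "length (As ! Suc i) = ns_d D" using rows[OF i] d_def by simp
    fix s assume "s < length (As ! Suc i)"
    then have s: "s < d" using rows[OF i] by simp
    have "As ! Suc i ! s \<in> set (blocks (Ss ! Suc i \<inter> Cs ! s) (ns_e D (Suc i) (Suc s)))"
      using set_blocks[of "Ss ! Suc i \<inter> Cs ! s"] fin i sub[OF i s] rows[OF i] s by auto
    then show "As ! Suc i ! s \<in> set (map (\<lambda>s. blocks (Ss ! Suc i \<inter> Cs ! s)
                             (ns_e D (Suc i) (Suc s))) [0..<ns_d D] ! s)"
      using s d_def by simp
  qed
  have hd: "As!0 = mkhd d Cs T"
  proof (rule nth_equalityI)
    have r0: "length (As!0) = d" using rows[of 0] ne by simp
    then show "length (As!0) = length (mkhd d Cs T)" unfolding mkhd_def by simp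
    fix s assume "s < length (As!0)"
    then have s: "s < d" using r0 by simp
    have lc: "length (col As s) = length As" unfolding col_def by simp
    have cn: "\<And>i. i < length As \<Longrightarrow> col As s ! i = As!i!s" unfolding col_def by simp
    have c0: "\<And>i. 0 < i \<Longrightarrow> i < length As \<Longrightarrow> As!0!s \<inter> As!i!s = {}"
    proof -
      fix i assume "0 < i" "i < length As"
      have "pairwise_disj (col As s)" using disj s d_def by simp
      then have "col As s ! 0 \<inter> col As s ! i = {}" using lc \<open>0<i\<close> \<open>i<length As\<close> unfolding pairwise_disj_def by (metis gr_implies_not0 less_trans)
      then show "As!0!s \<inter> As!i!s = {}" using cn[of 0] cn[of i] \<open>0<i\<close> \<open>i<length As\<close> Asne by simp
    qed
    have U: "\<Union> (set (col As s)) = (\<Union>i<length As. As!i!s)" unfolding col_def by auto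
    have V: "\<Union> (set (map (\<lambda>R. R!s) T)) = (\<Union>i\<in>{1..<length As}. As!i!s)"
    proof -
      have "set T = (\<lambda>i. As!i) ` {1..<length As}"
      proof -
        have "set T = (\<lambda>i. T!i) ` {..<length T}" by (auto simp: set_conv_nth)
        also have "\<dots> = (\<lambda>i. As!(Suc i)) ` {..<length As - 1}" using lenT lenAs Tnth by simp
        also have "\<dots> = (\<lambda>i. As!i) ` {1..<length As}"
        proof -
          have "Suc ` {0..<length As - 1} = {1..<length As}" using Asne by (simp add: image_Suc_atLeastLessThan)
          then show ?thesis by (metis image_image lessThan_atLeast0)
        qed
        finally show ?thesis .
      qed
      then show ?thesis by auto
    qed
    have "{..<length As} = insert 0 {1..<length As}" using Asne by auto
    then have "As!0!s = (\<Union>i<length As. As!i!s) - (\<Union>i\<in>{1..<length As}. As!i!s)"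
      using c0 by (auto simp: Suc_le_eq) (metis disjoint_iff)
    then show "As!0!s = mkhd d Cs T ! s" unfolding mkhd_def Cs_def using s U V by simp
  qed
  have "As = mkhd d Cs T # T" using AsT hd by simp
  then show ?thesis unfolding cands_def d_def[symmetric] using Cs_in Cs_M T_in by auto
qed

definition summ :: "nat list list \<Rightarrow> nat set list \<Rightarrow> nat set multiset \<Rightarrow> nat set list list \<Rightarrow> 'a::comm_ring_1" where
  "summ D Ss M As = (\<Prod>i<length D. wedge_sign (As!i)) *
      (\<Prod>s<ns_d D. wedge_coeff (col As s)) *
      (if mset (map (\<lambda>s. \<Union> (set (col As s))) [0..<ns_d D]) = M then 1 else 0)"

definition good :: "nat list list \<Rightarrow> nat set list \<Rightarrow> nat set multiset \<Rightarrow> nat set list list \<Rightarrow> bool" where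
  "good D Ss M As \<longleftrightarrow> As \<in> row_splits D Ss \<and> (\<forall>s<ns_d D. pairwise_disj (col As s)) \<and>
      mset (map (\<lambda>s. \<Union> (set (col As s))) [0..<ns_d D]) = M"

lemma summ_nz:
  assumes "summ D Ss M As \<noteq> (0::'a::comm_ring_1)"
  shows "(\<forall>s<ns_d D. pairwise_disj (col As s)) \<and> mset (map (\<lambda>s. \<Union> (set (col As s))) [0..<ns_d D]) = M"
proof (intro conjI allI impI)
  show "mset (map (\<lambda>s. \<Union> (set (col As s))) [0..<ns_d D]) = M"
    using assms unfolding summ_def by (auto split: if_splits)
  fix s assume s: "s < ns_d D"
  show "pairwise_disj (col As s)"
  proof (rule ccontr)
    assume "\<not> pairwise_disj (col As s)"
    then have "wedge_coeff (col As s) = (0::'a)" unfolding wedge_coeff_def by simp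
    then have "(\<Prod>s<ns_d D. wedge_coeff (col As s)) = (0::'a)"
      using s by (intro prod_zero) auto
    then show False using assms unfolding summ_def by simp
  qed
qed

lemma finite_rs:
  assumes fin: "\<forall>i<length D. finite (Ss!i)"
  shows "finite (row_splits D Ss)"
proof -
  define U where "U = (\<Union>i<length D. Ss!i)"
  have fU: "finite U" unfolding U_def using fin by auto
  have "row_splits D Ss \<subseteq> {As. set As \<subseteq> {R. set R \<subseteq> Pow U \<and> length R = ns_d D} \<and> length As = length D}"
  proof
    fix As assume A: "As \<in> row_splits D Ss"
    have "\<And>R. R \<in> set As \<Longrightarrow> set R \<subseteq> Pow U \<and> length R = ns_d D"
    proof -
      fix R assume "R \<in> set As"
      then obtain i where i: "i < length As" "R = As!i" by (auto simp: in_set_conv_nth)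
      then have "i < length D" using A unfolding row_splits_def by simp
      then have "length R = ns_d D" "\<Union> (set R) = Ss!i" using A i unfolding row_splits_def by auto
      moreover have "Ss!i \<subseteq> U" unfolding U_def using \<open>i < length D\<close> by auto
      ultimately show "set R \<subseteq> Pow U \<and> length R = ns_d D" by auto
    qed
    then show "As \<in> {As. set As \<subseteq> {R. set R \<subseteq> Pow U \<and> length R = ns_d D} \<and> length As = length D}"
      using A unfolding row_splits_def by auto
  qed
  moreover have "finite {R. set R \<subseteq> Pow U \<and> length R = ns_d D}"
    using fU by (intro finite_lists_length_eq) auto
  then have "finite {As. set As \<subseteq> {R. set R \<subseteq> Pow U \<and> length R = ns_d D} \<and> length As = length D}"
    by (rule finite_lists_length_eq)
  ultimately show ?thesis by (rule finite_subset)
qed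

lemma rb_eq:
  assumes ne: "D \<noteq> []" and fin: "\<forall>i<length D. finite (Ss!i)" and Ml: "set_mset M \<subseteq> set Ml"
  shows "rho_basis D Ss M = (sum_list (map (summ D Ss M) (remdups (filter (good D Ss M) (cands D Ss M Ml)))) :: 'a::comm_ring_1)"
proof -
  define S where "S = set (filter (good D Ss M) (cands D Ss M Ml))"
  have rhs: "sum_list (map (summ D Ss M) (remdups (filter (good D Ss M) (cands D Ss M Ml)))) = (sum (summ D Ss M) S :: 'a)"
    unfolding S_def by (subst sum_list_distinct_conv_sum_set) auto
  have sub: "S \<subseteq> row_splits D Ss" unfolding S_def good_def by auto
  have z: "\<forall>As\<in>row_splits D Ss - S. summ D Ss M As = (0::'a)"
  proof
    fix As assume A: "As \<in> row_splits D Ss - S"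
    show "summ D Ss M As = (0::'a)"
    proof (rule ccontr)
      assume "summ D Ss M As \<noteq> (0::'a)"
      from summ_nz[OF this] have c: "\<forall>s<ns_d D. pairwise_disj (col As s)"
        "mset (map (\<lambda>s. \<Union> (set (col As s))) [0..<ns_d D]) = M" by auto
      have "As \<in> set (cands D Ss M Ml)" using cover[OF _ ne fin c(1) Ml c(2)] A by auto
      then have "As \<in> S" using A c unfolding S_def good_def by auto
      then show False using A by auto
    qed
  qed
  have "rho_basis D Ss M = (sum (summ D Ss M) (row_splits D Ss) :: 'a)"
    unfolding rho_basis_def summ_def by simp
  also have "\<dots> = (sum (summ D Ss M) S :: 'a)"
    using sum.mono_neutral_right[OF finite_rs[OF fin] sub z] by simp
  finally show ?thesis using rhs by simp
qed

lemma of_int_if': "(of_int (if P then a else b) :: 'a::comm_ring_1) = (if P then of_int a else of_int b)" by simp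

lemma of_int_rb: "rho_basis D Ss M = (of_int (rho_basis D Ss M :: int) :: 'a::comm_ring_1)"
  unfolding rho_basis_def wedge_coeff_def wedge_sign_def by (simp add: of_int_sum of_int_prod of_int_if' cong: if_cong)

lemma inv_count_code: "inv_count As = card (Set.filter (\<lambda>(p,q,x,y). p<q \<and> x \<in> As!p \<and> y \<in> As!q \<and> y<x)
   ({0..<length As} \<times> {0..<length As} \<times> \<Union>(set As) \<times> \<Union>(set As)))"
  unfolding inv_count_def
proof (rule arg_cong[where f=card], rule set_eqI)
  fix t :: "nat \<times> nat \<times> nat \<times> nat"
  obtain p q x y where t: "t = (p,q,x,y)" by (cases t)
  have "p < q \<Longrightarrow> q < length As \<Longrightarrow> x \<in> As!p \<Longrightarrow> x \<in> \<Union>(set As)"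
    by (meson UnionI nth_mem less_trans)
  moreover have "q < length As \<Longrightarrow> y \<in> As!q \<Longrightarrow> y \<in> \<Union>(set As)"
    by (meson UnionI nth_mem)
  ultimately show "t \<in> {(p,q,x,y). p < q \<and> q < length As \<and> x \<in> As!p \<and> y \<in> As!q \<and> y < x} \<longleftrightarrow>
    t \<in> Set.filter (\<lambda>(p,q,x,y). p<q \<and> x \<in> As!p \<and> y \<in> As!q \<and> y<x)
   ({0..<length As} \<times> {0..<length As} \<times> \<Union>(set As) \<times> \<Union>(set As))"
    unfolding t by auto
qed

definition inv2 :: "nat set list \<Rightarrow> nat" where
  "inv2 As = (\<Sum>p<length As. \<Sum>q<length As. if p < q then card (Set.filter (\<lambda>(x,y). y < x) (As!p \<times> As!q)) else 0)"

lemma inv2_eq: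
  assumes fin: "\<forall>A\<in>set As. finite A"
  shows "inv_count As = inv2 As"
proof -
  define n where "n = length As"
  define P where "P = Set.filter (\<lambda>(p,q). p < q) ({..<n} \<times> {..<n})"
  define B where "B = (\<lambda>pq. Set.filter (\<lambda>(x::nat,y::nat). y < x) (As!fst pq \<times> As!snd pq))"
  define h where "h = (\<lambda>((p::nat,q::nat),(x::nat,y::nat)). (p,q,x,y))"
  have S: "{(p,q,x,y). p < q \<and> q < length As \<and> x \<in> As!p \<and> y \<in> As!q \<and> y < x} = h ` (SIGMA pq:P. B pq)"
    unfolding h_def P_def B_def n_def by (auto simp: image_iff)
  have inj: "inj h" unfolding h_def by (auto simp: inj_def)
  have finB: "\<And>pq. pq \<in> P \<Longrightarrow> finite (B pq)"
    unfolding P_def B_def n_def using fin by auto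
  have fP: "finite P" unfolding P_def by auto
  have "inv_count As = card (SIGMA pq:P. B pq)"
    unfolding inv_count_def S by (rule card_image) (rule inj_on_subset[OF inj], simp)
  also have "\<dots> = (\<Sum>pq\<in>P. card (B pq))" using fP finB by (intro card_SigmaI) auto
  also have "\<dots> = (\<Sum>pq\<in>{..<n} \<times> {..<n}. if fst pq < snd pq then card (B pq) else 0)"
    unfolding P_def by (subst sum.inter_filter[symmetric]) (auto simp: split_def)
  also have "\<dots> = inv2 As"
    unfolding inv2_def n_def B_def by (simp add: sum.cartesian_product split_def)
  finally show ?thesis .
qed

definition summ2 :: "nat list list \<Rightarrow> nat set list \<Rightarrow> nat set multiset \<Rightarrow> nat set list list \<Rightarrow> int" where
  "summ2 D Ss M As = (\<Prod>i<length D. (-1) ^ inv2 (As!i)) *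
      (\<Prod>s<ns_d D. if pairwise_disj (col As s) then (-1) ^ inv2 (col As s) else 0) *
      (if mset (map (\<lambda>s. \<Union> (set (col As s))) [0..<ns_d D]) = M then 1 else 0)"

lemma summ_summ2:
  assumes rs: "As \<in> row_splits D Ss" and fin: "\<forall>i<length D. finite (Ss!i)"
  shows "summ D Ss M As = summ2 D Ss M As"
proof -
  have lenAs: "length As = length D" using rs unfolding row_splits_def by simp
  have rows: "\<And>i. i < length D \<Longrightarrow> length (As!i) = ns_d D \<and> \<Union> (set (As!i)) = Ss!i"
    using rs unfolding row_splits_def by auto
  have fb: "\<And>i B. i < length D \<Longrightarrow> B \<in> set (As!i) \<Longrightarrow> finite B"
    using rows fin by (metis Union_upper finite_subset)
  have r: "\<And>i. i < length D \<Longrightarrow> inv_count (As!i) = inv2 (As!i)"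
    using fb by (intro inv2_eq) auto
  have c: "\<And>s. s < ns_d D \<Longrightarrow> inv_count (col As s) = inv2 (col As s)"
  proof (intro inv2_eq ballI)
    fix s B assume s: "s < ns_d D" and "B \<in> set (col As s)"
    then obtain i where i: "i < length As" "B = As!i!s" unfolding col_def by auto
    then show "finite B" using fb[of i B] rows[of i] lenAs s by auto
  qed
  have p1: "(\<Prod>i<length D. (-1::int) ^ inv_count (As!i)) = (\<Prod>i<length D. (-1) ^ inv2 (As!i))"
    by (rule prod.cong) (auto simp: r)
  have p2: "(\<Prod>s<ns_d D. if pairwise_disj (col As s) then (-1::int) ^ inv_count (col As s) else 0) =
     (\<Prod>s<ns_d D. if pairwise_disj (col As s) then (-1) ^ inv2 (col As s) else 0)"
    by (rule prod.cong) (auto simp: c)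
  show ?thesis unfolding summ_def summ2_def wedge_sign_def wedge_coeff_def p1 p2 ..
qed

lemma rb_eq2:
  assumes ne: "D \<noteq> []" and fin: "\<forall>i<length D. finite (Ss!i)" and Ml: "set_mset M \<subseteq> set Ml"
  shows "rho_basis D Ss M = sum_list (map (summ2 D Ss M) (remdups (filter (good D Ss M) (cands D Ss M Ml))))"
proof -
  have "rho_basis D Ss M = (sum_list (map (summ D Ss M) (remdups (filter (good D Ss M) (cands D Ss M Ml)))) :: int)"
    by (rule rb_eq[OF ne fin Ml])
  also have "\<dots> = sum_list (map (summ2 D Ss M) (remdups (filter (good D Ss M) (cands D Ss M Ml))))"
    by (rule arg_cong[where f=sum_list], rule map_cong) (auto simp: good_def intro!: summ_summ2 fin)
  finally show ?thesis .
qed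

lemmas comp_defs = summ2_def good_def row_splits_def mem_Collect_eq cands_def tailc_def mkhd_def blocks_def
  inv2_def pairwise_disj_def col_def ns_d_def ns_e_def


lemma finite_bt: "finite (basis_tuples D n)"
proof -
  have "basis_tuples D n \<subseteq> {xs. set xs \<subseteq> Pow {0..<n} \<and> length xs = length D}"
    unfolding basis_tuples_def by (auto simp: in_set_conv_nth) (metis atLeastLessThan_iff subsetD)
  moreover have "finite {xs. set xs \<subseteq> Pow {0..<n} \<and> length xs = length D}"
    by (rule finite_lists_length_eq) simp
  ultimately show ?thesis by (rule finite_subset)
qed

lemma nonzero_of:
  assumes bt: "Ss \<in> basis_tuples D n" and rb: "rho_basis D Ss M = (v::int)" and v: "v \<noteq> 0"
  shows "\<exists>c::nat set list \<Rightarrow> 'a::field_char_0. rho D n c \<noteq> (\<lambda>_. 0)"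
proof
  define c :: "nat set list \<Rightarrow> 'a" where "c = (\<lambda>T. if T = Ss then 1 else 0)"
  have "rho D n c M = (\<Sum>T\<in>basis_tuples D n. if T = Ss then rho_basis D T M else 0)"
    unfolding rho_def c_def by (rule sum.cong) auto
  also have "\<dots> = rho_basis D Ss M" using bt finite_bt by (simp add: sum.delta')
  also have "\<dots> = (of_int v :: 'a)" using of_int_rb[of D Ss M] rb by simp
  finally have "rho D n c M \<noteq> 0" using v by simp
  then show "rho D n c \<noteq> (\<lambda>_. 0)" by (metis)
qed

lemma rb1: "rho_basis [[1,1,1,2,2,3,3],[2],[3]] [{0,1,2,3,4,5,6},{1},{5}] {#{0,1,2},{1,3,5},{4,5,6}#} = (3::int)"
proof -
  have "rho_basis [[1,1,1,2,2,3,3],[2],[3]] [{0,1,2,3,4,5,6},{1},{5}] {#{0,1,2},{1,3,5},{4,5,6}#} = sum_list (map (summ2 [[1,1,1,2,2,3,3],[2],[3]] [{0,1,2,3,4,5,6},{1},{5}] {#{0,1,2},{1,3,5},{4,5,6}#}) (remdups (filter (good [[1,1,1,2,2,3,3],[2],[3]] [{0,1,2,3,4,5,6},{1},{5}] {#{0,1,2},{1,3,5},{4,5,6}#}) (cands [[1,1,1,2,2,3,3],[2],[3]] [{0,1,2,3,4,5,6},{1},{5}] {#{0,1,2},{1,3,5},{4,5,6}#} [{0,1,2},{1,3,5},{4,5,6}]))))"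
    by (rule rb_eq2) (simp_all add: less_Suc_eq)
  also have "\<dots> = 3" unfolding comp_defs by code_simp
  finally show ?thesis .
qed

lemma bt1: "[{0,1,2,3,4,5,6},{1},{5}] \<in> basis_tuples [[1,1,1,2,2,3,3],[2],[3]] 7"
  unfolding basis_tuples_def mem_Collect_eq by code_simp

lemma nz1: "\<exists>c::nat set list \<Rightarrow> 'a::field_char_0. rho [[1,1,1,2,2,3,3],[2],[3]] 7 c \<noteq> (\<lambda>_. 0)"
  by (rule nonzero_of[OF bt1 rb1]) simp

lemma rb2: "rho_basis [[1,1,1,2,2,3,3,4],[2,4,4],[3]] [{0,1,2,3,4,5,6,7},{0,5,6},{7}] {#{0,1,2},{0,3,4},{5,6,7},{5,6,7}#} = (2::int)"
proof -
  have "rho_basis [[1,1,1,2,2,3,3,4],[2,4,4],[3]] [{0,1,2,3,4,5,6,7},{0,5,6},{7}] {#{0,1,2},{0,3,4},{5,6,7},{5,6,7}#} = sum_list (map (summ2 [[1,1,1,2,2,3,3,4],[2,4,4],[3]] [{0,1,2,3,4,5,6,7},{0,5,6},{7}] {#{0,1,2},{0,3,4},{5,6,7},{5,6,7}#}) (remdups (filter (good [[1,1,1,2,2,3,3,4],[2,4,4],[3]] [{0,1,2,3,4,5,6,7},{0,5,6},{7}] {#{0,1,2},{0,3,4},{5,6,7},{5,6,7}#}) (cands [[1,1,1,2,2,3,3,4],[2,4,4],[3]] [{0,1,2,3,4,5,6,7},{0,5,6},{7}] {#{0,1,2},{0,3,4},{5,6,7},{5,6,7}#} [{0,1,2},{0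,3,4},{5,6,7}]))))"
    by (rule rb_eq2) (simp_all add: less_Suc_eq)
  also have "\<dots> = 2" unfolding comp_defs by code_simp
  finally show ?thesis .
qed

lemma bt2: "[{0,1,2,3,4,5,6,7},{0,5,6},{7}] \<in> basis_tuples [[1,1,1,2,2,3,3,4],[2,4,4],[3]] 8"
  unfolding basis_tuples_def mem_Collect_eq by code_simp

lemma nz2: "\<exists>c::nat set list \<Rightarrow> 'a::field_char_0. rho [[1,1,1,2,2,3,3,4],[2,4,4],[3]] 8 c \<noteq> (\<lambda>_. 0)"
  by (rule nonzero_of[OF bt2 rb2]) simp

lemma rb3: "rho_basis [[1,1,1,2,2,3,3,4,4],[2],[3],[4]] [{0,1,2,3,4,5,6,7,8},{4},{0},{1}] {#{0,1,2},{0,4,6},{1,7,8},{3,4,5}#} = (4::int)"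
proof -
  have "rho_basis [[1,1,1,2,2,3,3,4,4],[2],[3],[4]] [{0,1,2,3,4,5,6,7,8},{4},{0},{1}] {#{0,1,2},{0,4,6},{1,7,8},{3,4,5}#} = sum_list (map (summ2 [[1,1,1,2,2,3,3,4,4],[2],[3],[4]] [{0,1,2,3,4,5,6,7,8},{4},{0},{1}] {#{0,1,2},{0,4,6},{1,7,8},{3,4,5}#}) (remdups (filter (good [[1,1,1,2,2,3,3,4,4],[2],[3],[4]] [{0,1,2,3,4,5,6,7,8},{4},{0},{1}] {#{0,1,2},{0,4,6},{1,7,8},{3,4,5}#}) (cands [[1,1,1,2,2,3,3,4,4],[2],[3],[4]] [{0,1,2,3,4,5,6,7,8},{4},{0},{1}] {#{0,1,2},{0,4,6},{1,7,8},{3,4,5}#} [{0,1,2},{0,4,6},{1,7,8},{3,4,5}]))))"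
    by (rule rb_eq2) (simp_all add: less_Suc_eq)
  also have "\<dots> = 4" unfolding comp_defs by code_simp
  finally show ?thesis .
qed

lemma bt3: "[{0,1,2,3,4,5,6,7,8},{4},{0},{1}] \<in> basis_tuples [[1,1,1,2,2,3,3,4,4],[2],[3],[4]] 9"
  unfolding basis_tuples_def mem_Collect_eq by code_simp

lemma nz3: "\<exists>c::nat set list \<Rightarrow> 'a::field_char_0. rho [[1,1,1,2,2,3,3,4,4],[2],[3],[4]] 9 c \<noteq> (\<lambda>_. 0)"
  by (rule nonzero_of[OF bt3 rb3]) simp

lemma rb4: "rho_basis [[1,1,1,2,2,3,3,4,5],[2,4,4,5],[3,5]] [{0,1,2,3,4,5,6,7,8},{2,4,6,7},{0,5}] {#{0,2,7},{0,2,7},{1,3,8},{4,5,6},{4,5,6}#} = (-4::int)"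
proof -
  have "rho_basis [[1,1,1,2,2,3,3,4,5],[2,4,4,5],[3,5]] [{0,1,2,3,4,5,6,7,8},{2,4,6,7},{0,5}] {#{0,2,7},{0,2,7},{1,3,8},{4,5,6},{4,5,6}#} = sum_list (map (summ2 [[1,1,1,2,2,3,3,4,5],[2,4,4,5],[3,5]] [{0,1,2,3,4,5,6,7,8},{2,4,6,7},{0,5}] {#{0,2,7},{0,2,7},{1,3,8},{4,5,6},{4,5,6}#}) (remdups (filter (good [[1,1,1,2,2,3,3,4,5],[2,4,4,5],[3,5]] [{0,1,2,3,4,5,6,7,8},{2,4,6,7},{0,5}] {#{0,2,7},{0,2,7},{1,3,8},{4,5,6},{4,5,6}#}) (cands [[1,1,1,2,2,3,3,4,5],[2,4,4,5],[3,5]] [{0,1,2,3,4,5,6,7,8},{2,4,6,7},{0,5}] {#{0,2,7},{0,2,7},{1,3,8},{4,5,6},{4,5,6}#} [{0,2,7},{1,3,8},{4,5,6}]))))"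
    by (rule rb_eq2) (simp_all add: less_Suc_eq)
  also have "\<dots> = -4" unfolding comp_defs by code_simp
  finally show ?thesis .
qed

lemma bt4: "[{0,1,2,3,4,5,6,7,8},{2,4,6,7},{0,5}] \<in> basis_tuples [[1,1,1,2,2,3,3,4,5],[2,4,4,5],[3,5]] 9"
  unfolding basis_tuples_def mem_Collect_eq by code_simp

lemma nz4: "\<exists>c::nat set list \<Rightarrow> 'a::field_char_0. rho [[1,1,1,2,2,3,3,4,5],[2,4,4,5],[3,5]] 9 c \<noteq> (\<lambda>_. 0)"
  by (rule nonzero_of[OF bt4 rb4]) simp

theorem lemma5p3:
  assumes alg_closed: "\<forall>p::'a::field_char_0 poly. degree p \<ge> 1 \<longrightarrow> (\<exists>x. poly p x = 0)"
  shows "(\<exists>c::nat set list \<Rightarrow> 'a. rho [[1,1,1,2,2,3,3],[2],[3]] 7 c \<noteq> (\<lambda>_. 0)) \<and>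
         (\<exists>c::nat set list \<Rightarrow> 'a. rho [[1,1,1,2,2,3,3,4],[2,4,4],[3]] 8 c \<noteq> (\<lambda>_. 0)) \<and>
         (\<exists>c::nat set list \<Rightarrow> 'a. rho [[1,1,1,2,2,3,3,4,4],[2],[3],[4]] 9 c \<noteq> (\<lambda>_. 0)) \<and>
         (\<exists>c::nat set list \<Rightarrow> 'a. rho [[1,1,1,2,2,3,3,4,5],[2,4,4,5],[3,5]] 9 c \<noteq> (\<lambda>_. 0))"
    using nz1 nz2 nz3 nz4 by blast

end
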